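(* For every integer $n\ge 0$, $$\Phi^{(3)}[a, a'; b, b'; cq^{-n}; x, y] = \frac{1}{(q/c; q)_n} \sum_{k=0}^n \begin{bmatrix} n \\ k \end{bmatrix} (-c)^{k-n} q^{\binom{n+1-k}{2}} \Phi^{(3)}[a, a'; b, b'; c; xq^k, yq^k]$$ and $$\Phi^{(3)}[a, a'; b, b'; cq^n; x, y] = \sum_{k=0}^n \begin{bmatrix} n \\ k \end{bmatrix} c^k q^{2\binom{k}{2}} (cq^k; q)_{n-k}\, \Phi^{(3)}[a, a'; b, b'; cq^k; xq^k, yq^k].$$
   Context: Let $q$ be a complex number with $0<|q|<1$. For complex $z$ and integer $m\ge 0$, $(z;q)_m=\prod_{j=0}^{m-1}(1-zq^j)$, with $(z;q)_0=1$. For integers $0\le k\le n$, $\begin{bmatrix} n \\ k \end{bmatrix}=\frac{(q;q)_n}{(q;q)_k(q;q)_{n-k}}$ is the $q$-binomial coefficient, and $\binom{j}{2}=j(j-1)/2$. The $q$-Appell function $\Phi^{(3)}$ is $$\Phi^{(3)}[a, a'; b, b'; c; x, y] = \sum_{m, n \geq 0} \frac{(a; q)_m (a'; q)_n (b; q)_m (b'; q)_n}{(q; q)_m (q; q)_n (c; q)_{m+n}} x^m y^n.$$ Identities are understood as identities of power series in $x,y$ (formal, or convergent for small $|x|,|y|$), with complex parameters chosen so that no denominator occurring vanishes. *)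

theory Defs
  imports "HOL-Analysis.Analysis"
begin

definition qpoch :: "complex \<Rightarrow> complex \<Rightarrow> nat \<Rightarrow> complex" where
  "qpoch z q m = (\<Prod>j<m. 1 - z * q ^ j)"

definition qbinom :: "complex \<Rightarrow> nat \<Rightarrow> nat \<Rightarrow> complex" where
  "qbinom q n k = qpoch q q n / (qpoch q q k * qpoch q q (n - k))"

definition Phi3 :: "complex \<Rightarrow> complex \<Rightarrow> complex \<Rightarrow> complex \<Rightarrow> complex \<Rightarrow> complex
    \<Rightarrow> complex \<Rightarrow> complex \<Rightarrow> complex" where
  "Phi3 q a a' b b' c x y =
     (\<Sum>\<^sub>\<infinity>(m, n) \<in> UNIV.
        qpoch a q m * qpoch a' q n * qpoch b q m * qpoch b' q n
        / (qpoch q q m * qpoch q q n * qpoch c q (m + n)) * x ^ m * y ^ n)"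

end

theory Submission
  imports Defs
begin


lemma qpoch_0[simp]: "qpoch z q 0 = 1" by (simp add: qpoch_def)
lemma qpoch_Suc: "qpoch z q (Suc n) = qpoch z q n * (1 - z*q^n)"
  by (simp add: qpoch_def)
lemma qpoch_Suc_front: "qpoch z q (Suc n) = (1 - z) * qpoch (z*q) q n"
  unfolding qpoch_def prod.lessThan_Suc_shift by (simp add: mult.assoc)
lemma qpoch_add: "qpoch z q (m+n) = qpoch z q m * qpoch (z*q^m) q n"
  by (induction n) (simp_all add: qpoch_Suc power_add mult_ac)
lemma qpoch_nonzero: "(\<And>j. j < n \<Longrightarrow> z*q^j \<noteq> 1) \<Longrightarrow> qpoch z q n \<noteq> 0"
  by (simp add: qpoch_def)


lemma g1: fixes Pn Pj Pd q a b :: complex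
  assumes "Pj \<noteq> 0" "Pd \<noteq> 0" "1 - q*a \<noteq> 0" "1 - q*b \<noteq> 0"
  shows "Pn*(1 - q*(a*q*b))/(Pj*(1-q*a)*(Pd*(1-q*b))) = q*a*Pn/(Pj*(1-q*a)*Pd) + Pn/(Pj*(Pd*(1-q*b)))"
  using assms by (simp add: divide_simps) (simp add: algebra_simps)
lemma g2: fixes Pn Pj Pd q a b :: complex
  assumes "Pj \<noteq> 0" "Pd \<noteq> 0" "1 - q*a \<noteq> 0" "1 - q*b \<noteq> 0"
  shows "Pn*(1 - q*(a*q*b))/(Pj*(1-q*a)*(Pd*(1-q*b))) = Pn/(Pj*(1-q*a)*Pd) + q*b*Pn/(Pj*(Pd*(1-q*b)))"
  using assms by (simp add: divide_simps) (simp add: algebra_simps)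

definition qb :: "complex \<Rightarrow> nat \<Rightarrow> nat \<Rightarrow> complex" where
  "qb q n k = (if k \<le> n then qbinom q n k else 0)"

lemma qb_n0: "qpoch q q n \<noteq> 0 \<Longrightarrow> qb q n 0 = 1"
  by (simp add: qb_def qbinom_def)
lemma qb_nn: "qpoch q q n \<noteq> 0 \<Longrightarrow> qb q n n = 1"
  by (simp add: qb_def qbinom_def)

lemma pascal1_aux:
  assumes qq: "\<And>n. qpoch q q n \<noteq> 0" and "j < n"
  shows "qbinom q (Suc n) (Suc j) = q^(Suc j) * qbinom q n (Suc j) + qbinom q n j"
proof -
  obtain d where n: "n = j + 1 + d" using \<open>j < n\<close> by (metis Suc_eq_plus1 add_Suc less_iff_Suc_add)
  have e1: "Suc n - Suc j = Suc d" "n - Suc j = d" "n - j = Suc d" using n by auto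
  have A: "qpoch q q (Suc n) = qpoch q q n * (1 - q*q^n)" by (rule qpoch_Suc)
  have B: "qpoch q q (Suc j) = qpoch q q j * (1 - q*q^j)" by (rule qpoch_Suc)
  have C: "qpoch q q (Suc d) = qpoch q q d * (1 - q*q^d)" by (rule qpoch_Suc)
  have nz: "qpoch q q n \<noteq> 0" "qpoch q q j \<noteq> 0" "qpoch q q d \<noteq> 0" "1 - q*q^j \<noteq> 0" "1 - q*q^d \<noteq> 0"
    using qq[of "Suc j"] qq[of "Suc d"] qq by (auto simp: B C)
  have qn: "q^n = q^j * q * q^d" using n by (simp add: power_add)
  show ?thesis unfolding qbinom_def e1 A B C qn power_Suc
    using g1[of "qpoch q q j" "qpoch q q d" q "q^j" "q^d" "qpoch q q n"] nz by (simp add: mult_ac)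
qed

lemma pascal2_aux:
  assumes qq: "\<And>n. qpoch q q n \<noteq> 0" and "j < n"
  shows "qbinom q (Suc n) (Suc j) = qbinom q n (Suc j) + q^(n-j) * qbinom q n j"
proof -
  obtain d where n: "n = j + 1 + d" using \<open>j < n\<close> by (metis Suc_eq_plus1 add_Suc less_iff_Suc_add)
  have e1: "Suc n - Suc j = Suc d" "n - Suc j = d" "n - j = Suc d" using n by auto
  have A: "qpoch q q (Suc n) = qpoch q q n * (1 - q*q^n)" by (rule qpoch_Suc)
  have B: "qpoch q q (Suc j) = qpoch q q j * (1 - q*q^j)" by (rule qpoch_Suc)
  have C: "qpoch q q (Suc d) = qpoch q q d * (1 - q*q^d)" by (rule qpoch_Suc)
  have nz: "qpoch q q n \<noteq> 0" "qpoch q q j \<noteq> 0" "qpoch q q d \<noteq> 0" "1 - q*q^j \<noteq> 0" "1 - q*q^d \<noteq> 0"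
    using qq[of "Suc j"] qq[of "Suc d"] qq by (auto simp: B C)
  have qn: "q^n = q^j * q * q^d" using n by (simp add: power_add)
  show ?thesis unfolding qbinom_def e1 A B C qn power_Suc
    using g2[of "qpoch q q j" "qpoch q q d" q "q^j" "q^d" "qpoch q q n"] nz by (simp add: mult_ac)
qed

lemma pascal1:
  assumes qq: "\<And>n. qpoch q q n \<noteq> 0"
  shows "qb q (Suc n) k = q^k * qb q n k + (case k of 0 \<Rightarrow> 0 | Suc j \<Rightarrow> qb q n j)"
proof (cases k)
  case 0 then show ?thesis using qq by (simp add: qb_n0)
next
  case (Suc j)
  show ?thesis
  proof (cases "j < n")
    case True then show ?thesis using Suc pascal1_aux[OF qq] by (simp add: qb_def)
  next
    case False
    then show ?thesis using Suc qq qb_nn[of q n] by (auto simp: qb_def qbinom_def)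
  qed
qed

lemma pascal2:
  assumes qq: "\<And>n. qpoch q q n \<noteq> 0"
  shows "qb q (Suc n) k = qb q n k + (case k of 0 \<Rightarrow> 0 | Suc j \<Rightarrow> q^(n-j) * qb q n j)"
proof (cases k)
  case 0 then show ?thesis using qq by (simp add: qb_n0)
next
  case (Suc j)
  show ?thesis
  proof (cases "j < n")
    case True then show ?thesis using Suc pascal2_aux[OF qq] by (simp add: qb_def)
  next
    case False
    then show ?thesis using Suc qq qb_nn[of q n] by (auto simp: qb_def qbinom_def)
  qed
qed


lemma qb_out: "n < k \<Longrightarrow> qb q n k = 0" by (simp add: qb_def)

lemma choose2_0[simp]: "(0::nat) choose 2 = 0" by (simp add: numeral_2_eq_2)

lemma choose2_1[simp]: "Suc 0 choose 2 = 0" by (simp add: numeral_2_eq_2)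

lemma choose2_Suc: "Suc j choose 2 = (j choose 2) + j"
  by (simp add: numeral_2_eq_2)

lemma qbinomial_thm:
  assumes qq: "\<And>n. qpoch q q n \<noteq> 0"
  shows "qpoch u q n = (\<Sum>k\<le>n. qb q n k * (-u)^k * q^(k choose 2))"
proof (induction n arbitrary: u)
  case 0 then show ?case using qq by (simp add: qb_n0)
next
  case (Suc n)
  define T where "T = (\<lambda>u k. (-u)^k * q^(k choose 2))"
  have "(\<Sum>k\<le>Suc n. qb q (Suc n) k * (-u)^k * q^(k choose 2)) = (\<Sum>k\<le>Suc n. qb q (Suc n) k * T u k)"
    by (simp add: T_def mult.assoc)
  also have "\<dots> = (\<Sum>k\<le>Suc n. q^k * qb q n k * T u k) + (\<Sum>k\<le>Suc n. (case k of 0 \<Rightarrow> 0 | Suc j \<Rightarrow> qb q n j) * T u k)"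
    unfolding pascal1[OF qq] by (simp only: distrib_right sum.distrib)
  also have "(\<Sum>k\<le>Suc n. q^k * qb q n k * T u k) = (\<Sum>k\<le>n. qb q n k * T (u*q) k)"
  proof -
    have h: "\<And>k. (-(q*u))^k = q^k * (-u)^k" by (metis mult_minus_right power_mult_distrib)
    have h2: "\<And>k. (-(u*q))^k = q^k * (-u)^k" by (metis mult.commute mult_minus_right power_mult_distrib)
    show ?thesis by (simp add: qb_out T_def) (rule sum.cong, simp_all add: h h2)
  qed
  also have "\<dots> = qpoch (u*q) q n" using Suc[of "u*q"] by (simp add: T_def mult.assoc)
  also have "(\<Sum>k\<le>Suc n. (case k of 0 \<Rightarrow> 0 | Suc j \<Rightarrow> qb q n j) * T u k) = (\<Sum>j\<le>n. qb q n j * T u (Suc j))"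
    unfolding sum.atMost_Suc_shift by simp
  also have "\<dots> = (\<Sum>j\<le>n. (-u) * (qb q n j * T (u*q) j))"
  proof (rule sum.cong)
    fix j
    have h: "(-(q*u))^j = q^j * (-u)^j" by (metis mult_minus_right power_mult_distrib)
    show "qb q n j * T u (Suc j) = (-u) * (qb q n j * T (u*q) j)"
      by (simp add: T_def choose2_Suc power_add mult.commute[of u q] h mult_ac)
  qed simp
  also have "\<dots> = (-u) * qpoch (u*q) q n" using Suc[of "u*q"] by (simp add: T_def sum_distrib_left mult.assoc)
  finally show ?case by (simp add: qpoch_Suc_front algebra_simps)
qed

lemma qF:
  assumes qq: "\<And>n. qpoch q q n \<noteq> 0"
  shows "(\<Sum>k\<le>n. qb q n k * z^k * q^(2*(k choose 2)) * qpoch (z*q^k) q (n-k)) = 1"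
proof (induction n arbitrary: z)
  case 0 then show ?case using qq by (simp add: qb_n0)
next
  case (Suc n)
  define T where "T = (\<lambda>m z k. z^k * q^(2*(k choose 2)) * qpoch (z*q^k) q (m-k))"
  have "(\<Sum>k\<le>Suc n. qb q (Suc n) k * z^k * q^(2*(k choose 2)) * qpoch (z*q^k) q (Suc n-k))
      = (\<Sum>k\<le>Suc n. qb q (Suc n) k * T (Suc n) z k)"
    by (simp add: T_def mult.assoc)
  also have "\<dots> = (\<Sum>k\<le>Suc n. qb q n k * T (Suc n) z k) + (\<Sum>k\<le>Suc n. (case k of 0 \<Rightarrow> 0 | Suc j \<Rightarrow> q^(n-j) * qb q n j) * T (Suc n) z k)"
    unfolding pascal2[OF qq] by (simp only: distrib_right sum.distrib)
  also have "(\<Sum>k\<le>Suc n. qb q n k * T (Suc n) z k) = (\<Sum>k\<le>n. (1 - z*q^n) * (qb q n k * T n z k))"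
  proof -
    have "(\<Sum>k\<le>Suc n. qb q n k * T (Suc n) z k) = (\<Sum>k\<le>n. qb q n k * T (Suc n) z k)"
      by (simp add: qb_out)
    also have "\<dots> = (\<Sum>k\<le>n. (1 - z*q^n) * (qb q n k * T n z k))"
    proof (rule sum.cong)
      fix k assume "k \<in> {..n}"
      then have k: "k \<le> n" by simp
      then have e: "Suc n - k = Suc (n - k)" by simp
      have "z * q^k * q^(n-k) = z*q^n" using k by (simp add: mult.assoc flip: power_add)
      then show "qb q n k * T (Suc n) z k = (1 - z*q^n) * (qb q n k * T n z k)"
        unfolding T_def e qpoch_Suc by (simp add: mult_ac)
    qed simp
    finally show ?thesis .
  qed
  also have "\<dots> = 1 - z*q^n" using Suc[of z] by (simp add: T_def flip: sum_distrib_left) (simp add: mult.assoc)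
  also have "(\<Sum>k\<le>Suc n. (case k of 0 \<Rightarrow> 0 | Suc j \<Rightarrow> q^(n-j) * qb q n j) * T (Suc n) z k)
     = (\<Sum>j\<le>n. q^(n-j) * qb q n j * T (Suc n) z (Suc j))"
    unfolding sum.atMost_Suc_shift by simp
  also have "\<dots> = (\<Sum>j\<le>n. (z*q^n) * (qb q n j * T n (z*q) j))"
  proof (rule sum.cong)
    fix j assume "j \<in> {..n}"
    then have j: "j \<le> n" by simp
    have e: "q^(n-j) * q^j = q^n" using j by (simp flip: power_add)
    have "q^(n-j) * qb q n j * T (Suc n) z (Suc j) = (q^(n-j) * q^j) * (z * (qb q n j * T n (z*q) j))"
      by (simp add: T_def choose2_Suc power_add power_mult_distrib power_mult power2_eq_square mult_ac)
    also have "\<dots> = q^n * (z * (qb q n j * T n (z*q) j))" by (simp only: e)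
    finally show "q^(n-j) * qb q n j * T (Suc n) z (Suc j) = (z*q^n) * (qb q n j * T n (z*q) j)"
      by (simp add: mult_ac)
  qed simp
  also have "\<dots> = z*q^n" using Suc[of "z*q"] by (simp add: T_def flip: sum_distrib_left) (simp add: mult.assoc)
  finally show ?case by simp
qed


lemma choose2_add: "(k+d) choose 2 = (k choose 2) + (d choose 2) + k*d"
  by (induction d) (simp_all add: choose2_Suc)

lemma choose2_sq: "2*(k choose 2) + k = k*k"
  by (induction k) (simp_all add: choose2_Suc)

lemma choose2_exp: "k \<le> n \<Longrightarrow> ((n+1-k) choose 2) + k*n = (k choose 2) + ((n+1) choose 2)"
proof -
  assume "k \<le> n"
  then obtain d where n: "n = k + d" using le_Suc_ex by blast
  have e: "n + 1 - k = Suc d" using n by simp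
  have "Suc (k + d) = k + Suc d" by simp
  then have e2: "(n+1) choose 2 = (k choose 2) + (Suc d choose 2) + k * Suc d"
    using n choose2_add[of k "Suc d"] by simp
  have f1: "k*n = k*k + k*d" using n by (simp add: algebra_simps)
  have f2: "k * Suc d = k*d + k" by simp
  show ?thesis unfolding e using e2 f1 f2 choose2_sq[of k] by linarith
qed

lemma key2:
  assumes qq: "\<And>n. qpoch q q n \<noteq> 0" and H: "\<forall>j::nat. c * q ^ j \<noteq> 1"
  shows "(\<Sum>k\<le>n. qbinom q n k * c^k * q^(2*(k choose 2)) * qpoch (c*q^k) q (n-k) * q^(k*N) / qpoch (c*q^k) q N)
         = 1 / qpoch (c*q^n) q N"
proof -
  have nz: "qpoch (c*q^k) q M \<noteq> 0" for k M
    by (rule qpoch_nonzero) (use H in \<open>simp add: mult.assoc flip: power_add\<close>)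
  have "(\<Sum>k\<le>n. qbinom q n k * c^k * q^(2*(k choose 2)) * qpoch (c*q^k) q (n-k) * q^(k*N) / qpoch (c*q^k) q N)
        * qpoch (c*q^n) q N
      = (\<Sum>k\<le>n. qb q n k * (c*q^N)^k * q^(2*(k choose 2)) * qpoch ((c*q^N)*q^k) q (n-k))"
    unfolding sum_distrib_right
  proof (rule sum.cong)
    fix k assume "k \<in> {..n}"
    then have k: "k \<le> n" by simp
    have cc: "c*q^k*q^(n-k) = c*q^n" using k by (simp add: mult.assoc flip: power_add)
    have "qpoch (c*q^k) q (n-k) * qpoch (c*q^n) q N = qpoch (c*q^k) q ((n-k) + N)"
      using qpoch_add[of "c*q^k" q "n-k" N] unfolding cc by simp
    also have "\<dots> = qpoch (c*q^k) q N * qpoch (c*q^N*q^k) q (n-k)"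
      by (subst add.commute) (simp add: qpoch_add mult_ac)
    finally have E: "qpoch (c*q^k) q (n-k) * qpoch (c*q^n) q N = qpoch (c*q^k) q N * qpoch (c*q^N*q^k) q (n-k)" .
    have "qbinom q n k * c^k * q^(2*(k choose 2)) * qpoch (c*q^k) q (n-k) * q^(k*N) / qpoch (c*q^k) q N * qpoch (c*q^n) q N
        = qbinom q n k * c^k * q^(2*(k choose 2)) * q^(k*N) * (qpoch (c*q^k) q (n-k) * qpoch (c*q^n) q N) / qpoch (c*q^k) q N"
      by (simp add: field_simps)
    also have "\<dots> = qb q n k * (c*q^N)^k * q^(2*(k choose 2)) * qpoch ((c*q^N)*q^k) q (n-k)"
      unfolding E using nz[of k N] k by (simp add: qb_def power_mult_distrib power_mult mult.commute[of k N])
    finally show "qbinom q n k * c^k * q^(2*(k choose 2)) * qpoch (c*q^k) q (n-k) * q^(k*N) / qpoch (c*q^k) q N * qpoch (c*q^n) q N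
        = qb q n k * (c*q^N)^k * q^(2*(k choose 2)) * qpoch ((c*q^N)*q^k) q (n-k)" .
  qed simp
  also have "\<dots> = 1" by (rule qF[OF qq])
  finally show ?thesis using nz[of n N] by (simp add: field_simps)
qed

lemma powi_diff_nat: "q \<noteq> 0 \<Longrightarrow> (q::complex) powi (int j - int n) = q^j / q^n"
  by (simp add: power_int_diff)

lemma qpoch_neg_n: "q \<noteq> 0 \<Longrightarrow> c \<noteq> 0 \<Longrightarrow>
   qpoch (c/q^n) q n * q^((n+1) choose 2) = (-c)^n * qpoch (q/c) q n"
proof (induction n)
  case 0 then show ?case by simp
next
  case (Suc n)
  have "qpoch (c/q^Suc n) q (Suc n) = (1 - c/q^Suc n) * qpoch (c/q^n) q n"
    unfolding qpoch_Suc_front using Suc.prems by (simp add: field_simps)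
  moreover have "(Suc n + 1) choose 2 = ((n+1) choose 2) + Suc n"
    using choose2_Suc[of "Suc n"] by simp
  ultimately have "qpoch (c/q^Suc n) q (Suc n) * q^((Suc n+1) choose 2)
     = (1 - c/q^Suc n) * q^Suc n * (qpoch (c/q^n) q n * q^((n+1) choose 2))"
    by (simp add: power_add mult_ac)
  also have "\<dots> = (1 - c/q^Suc n) * q^Suc n * ((-c)^n * qpoch (q/c) q n)" using Suc by simp
  also have "\<dots> = (-c)^Suc n * qpoch (q/c) q (Suc n)"
    unfolding qpoch_Suc using Suc.prems by (simp add: field_simps)
  finally show ?case .
qed

lemma key1:
  assumes qq: "\<And>n. qpoch q q n \<noteq> 0" and q0: "q \<noteq> 0" and c0: "c \<noteq> 0"
    and H: "\<forall>j::int. j \<ge> - int n \<longrightarrow> c * q powi j \<noteq> 1"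
  shows "1 / qpoch (q/c) q n * (\<Sum>k\<le>n. qbinom q n k * (-c) powi (int k - int n) * q^((n+1-k) choose 2) * q^(k*N) / qpoch c q N)
         = 1 / qpoch (c/q^n) q N"
proof -
  have nz: "qpoch (c/q^n) q M \<noteq> 0" for M
  proof (rule qpoch_nonzero)
    fix j
    have "c / q^n * q^j = c * q powi (int j - int n)" using q0 by (simp add: powi_diff_nat)
    then show "c / q ^ n * q ^ j \<noteq> 1" using H by auto
  qed
  define u where "u = c/q^n * q^N"
  have E1: "qpoch (c/q^n) q N * qpoch u q n = qpoch (c/q^n) q n * qpoch c q N"
    using qpoch_add[of "c/q^n" q N n] qpoch_add[of "c/q^n" q n N] q0 by (simp add: u_def add.commute)
  have E2: "qpoch (c/q^n) q n * q^((n+1) choose 2) = (-c)^n * qpoch (q/c) q n"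
    by (rule qpoch_neg_n[OF q0 c0])
  have L: "qpoch (c/q^n) q N * qpoch u q n \<noteq> 0"
    using nz[of "N+n"] qpoch_add[of "c/q^n" q N n] by (simp add: u_def)
  have nzu: "qpoch u q n \<noteq> 0" using L by auto
  have nzc: "qpoch c q N \<noteq> 0" using L E1 by auto
  have S: "(\<Sum>k\<le>n. qbinom q n k * (-c) powi (int k - int n) * q^((n+1-k) choose 2) * q^(k*N) / qpoch c q N)
     = q^((n+1) choose 2) * qpoch u q n / ((-c)^n * qpoch c q N)"
  proof -
    have "(\<Sum>k\<le>n. qbinom q n k * (-c) powi (int k - int n) * q^((n+1-k) choose 2) * q^(k*N) / qpoch c q N)
       = (\<Sum>k\<le>n. q^((n+1) choose 2) / ((-c)^n * qpoch c q N) * (qb q n k * (-u)^k * q^(k choose 2)))"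
    proof (rule sum.cong)
      fix k assume "k \<in> {..n}"
      then have k: "k \<le> n" by simp
      have ex: "q^((n+1-k) choose 2) * q^(k*n) = q^(k choose 2) * q^((n+1) choose 2)"
        using choose2_exp[OF k] by (simp flip: power_add)
      have pw: "(-c) powi (int k - int n) = (-c)^k / (-c)^n" using c0 by (simp add: power_int_diff)
      have "-u = (-c) * (q^N / q^n)" by (simp add: u_def)
      then have "(-u)^k = (-c)^k * ((q^N)^k / (q^n)^k)" by (simp only: power_mult_distrib power_divide)
      also have "\<dots> = (-c)^k * (q^(k*N) / q^(k*n))" by (simp add: mult.commute[of k] power_mult)
      finally have uk: "(-u)^k * q^(k*n) = (-c)^k * q^(k*N)" using q0 by simp
      have "qbinom q n k * (-c) powi (int k - int n) * q^((n+1-k) choose 2) * q^(k*N) / qpoch c q N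
         = qb q n k * ((-c)^k * q^(k*N)) * q^((n+1-k) choose 2) / ((-c)^n * qpoch c q N)"
        using k by (simp add: pw qb_def)
      also have "\<dots> = qb q n k * ((-u)^k * (q^((n+1-k) choose 2) * q^(k*n))) / ((-c)^n * qpoch c q N)"
        by (simp flip: uk)
      also have "\<dots> = q^((n+1) choose 2) / ((-c)^n * qpoch c q N) * (qb q n k * (-u)^k * q^(k choose 2))"
        unfolding ex by (simp add: field_simps)
      finally show "qbinom q n k * (-c) powi (int k - int n) * q^((n+1-k) choose 2) * q^(k*N) / qpoch c q N
         = q^((n+1) choose 2) / ((-c)^n * qpoch c q N) * (qb q n k * (-u)^k * q^(k choose 2))" .
    qed simp
    also have "\<dots> = q^((n+1) choose 2) / ((-c)^n * qpoch c q N) * qpoch u q n"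
      by (simp add: qbinomial_thm[OF qq, of u n] sum_distrib_left)
    finally show ?thesis by simp
  qed
  have "1 / qpoch (q/c) q n * (q^((n+1) choose 2) * qpoch u q n / ((-c)^n * qpoch c q N))
      = q^((n+1) choose 2) * qpoch u q n / (((-c)^n * qpoch (q/c) q n) * qpoch c q N)"
    by (simp add: field_simps)
  also have "\<dots> = q^((n+1) choose 2) * qpoch u q n / ((qpoch (c/q^n) q n * q^((n+1) choose 2)) * qpoch c q N)"
    by (simp only: E2)
  also have "\<dots> = qpoch u q n / (qpoch (c/q^n) q n * qpoch c q N)"
    using q0 by (simp add: field_simps)
  also have "\<dots> = qpoch u q n / (qpoch (c/q^n) q N * qpoch u q n)" by (simp only: E1)
  also have "\<dots> = 1 / qpoch (c/q^n) q N" using nzu by simp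
  finally show ?thesis using S by simp
qed




lemma qpoch_lim:
  assumes q1: "norm q < 1"
  shows "qpoch a q \<longlonglongrightarrow> prodinf (\<lambda>j. 1 - a*q^j)"
    and "convergent_prod (\<lambda>j. 1 - a*q^j)"
proof -
  have "summable (\<lambda>j. norm a * norm q ^ j)" using q1 by (intro summable_mult summable_geometric) simp
  then have "summable (\<lambda>j. norm ((1 - a*q^j) - 1))" by (simp add: norm_mult norm_power)
  then show cp: "convergent_prod (\<lambda>j. 1 - a*q^j)"
    by (intro abs_convergent_prod_imp_convergent_prod summable_imp_abs_convergent_prod)
  have "(\<lambda>n. \<Prod>i\<le>n. 1 - a*q^i) \<longlonglongrightarrow> prodinf (\<lambda>j. 1 - a*q^j)"
    by (rule convergent_prod_LIMSEQ[OF cp])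
  then have "(\<lambda>n. qpoch a q (Suc n)) \<longlonglongrightarrow> prodinf (\<lambda>j. 1 - a*q^j)"
    by (simp add: qpoch_def lessThan_Suc_atMost)
  then show "qpoch a q \<longlonglongrightarrow> prodinf (\<lambda>j. 1 - a*q^j)" by (rule LIMSEQ_imp_Suc)
qed

lemma qpoch_bound:
  assumes "norm q < 1" shows "\<exists>B. \<forall>m. norm (qpoch a q m) \<le> B"
proof -
  have "Bseq (qpoch a q)" using qpoch_lim(1)[OF assms] convergent_def convergent_imp_Bseq by blast
  then show ?thesis unfolding Bseq_def by blast
qed

lemma qpoch_inv_bound:
  assumes "norm q < 1" and H: "\<forall>j. a*q^j \<noteq> 1" shows "\<exists>B. \<forall>m. norm (1 / qpoch a q m) \<le> B"
proof -
  have nz: "prodinf (\<lambda>j. 1 - a*q^j) \<noteq> 0"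
    using prodinf_nonzero[OF qpoch_lim(2)[OF assms(1)]] H by simp
  have "(\<lambda>m. 1 / qpoch a q m) \<longlonglongrightarrow> 1 / prodinf (\<lambda>j. 1 - a*q^j)"
    by (intro tendsto_divide tendsto_const qpoch_lim(1)[OF assms(1)] nz)
  then have "Bseq (\<lambda>m. 1 / qpoch a q m)" using convergent_def convergent_imp_Bseq by blast
  then show ?thesis unfolding Bseq_def by blast
qed

lemma geo2_summable:
  fixes r s :: real assumes "0 \<le> r" "r < 1" "0 \<le> s" "s < 1"
  shows "(\<lambda>(i,j). r^i * s^j) summable_on UNIV"
proof -
  have "(\<lambda>(i,j). r^i * s^j) summable_on Sigma UNIV (\<lambda>_. UNIV)"
  proof (rule summable_on_SigmaI[where g = "\<lambda>i. r^i * (1 / (1 - s))"])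
    fix i :: nat
    have "(\<lambda>j. r^i * s^j) sums (r^i * (1 / (1 - s)))"
      using assms by (intro sums_mult geometric_sums) auto
    then show "((\<lambda>j. (\<lambda>(i,j). r^i * s^j) (i, j)) has_sum r^i * (1 / (1 - s))) UNIV"
      using assms by (auto intro!: sums_nonneg_imp_has_sum)
  next
    have "summable (\<lambda>i. r^i * (1 / (1 - s)))" using assms by (intro summable_mult2 summable_geometric) auto
    then show "(\<lambda>i. r^i * (1 / (1 - s))) summable_on UNIV"
      using assms by (subst summable_on_UNIV_nonneg_real_iff) auto
  qed (use assms in auto)
  then show ?thesis by simp
qed

lemma nm: "norm (a::complex) \<le> A \<Longrightarrow> norm b \<le> B \<Longrightarrow> norm (a*b) \<le> A*B"
  unfolding norm_mult by (rule mult_mono) (auto intro: order_trans[OF norm_ge_zero])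

definition tm where
  "tm q a a' b b' c x y = (\<lambda>(m, n). qpoch a q m * qpoch a' q n * qpoch b q m * qpoch b' q n
        / (qpoch q q m * qpoch q q n * qpoch c q (m + n)) * x ^ m * y ^ n)"

lemma Phi3_tm: "Phi3 q a a' b b' c x y = infsum (tm q a a' b b' c x y) UNIV"
  by (simp add: Phi3_def tm_def)

lemma tm_summable:
  assumes q1: "norm q < 1" and q0: "q \<noteq> 0" and x1: "norm x < 1" and y1: "norm y < 1"
    and H: "\<forall>j. c*q^j \<noteq> 1"
  shows "tm q a a' b b' c x y summable_on UNIV"
proof -
  have Hq: "\<forall>j. q*q^j \<noteq> 1"
  proof
    fix j :: nat
    have "norm q ^ j \<le> 1" using q1 by (intro power_le_one) simp_all
    then have "norm q * norm q ^ j \<le> norm q" by (intro mult_left_le) simp_all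
    then have "norm (q*q^j) \<le> norm q" by (simp add: norm_mult norm_power)
    also have "\<dots> < 1" using q1 by simp
    finally show "q*q^j \<noteq> 1" by auto
  qed
  obtain B1 where B1: "\<forall>m. norm (qpoch a q m) \<le> B1" using qpoch_bound[OF q1] by blast
  obtain B2 where B2: "\<forall>m. norm (qpoch a' q m) \<le> B2" using qpoch_bound[OF q1] by blast
  obtain B3 where B3: "\<forall>m. norm (qpoch b q m) \<le> B3" using qpoch_bound[OF q1] by blast
  obtain B4 where B4: "\<forall>m. norm (qpoch b' q m) \<le> B4" using qpoch_bound[OF q1] by blast
  obtain B5 where B5: "\<forall>m. norm (1 / qpoch q q m) \<le> B5" using qpoch_inv_bound[OF q1 Hq] by blast
  obtain B6 where B6: "\<forall>m. norm (1 / qpoch c q m) \<le> B6" using qpoch_inv_bound[OF q1 H] by blast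
  define K where "K = B1*B2*B3*B4*B5*B5*B6"
  have g: "(\<lambda>(i,j). K * (norm x^i * norm y^j)) summable_on UNIV"
    using geo2_summable[of "norm x" "norm y"] x1 y1 summable_on_cmult_right[where c=K]
    by (simp add: case_prod_unfold)
  have "(\<lambda>p. norm (tm q a a' b b' c x y p)) summable_on UNIV"
  proof (rule summable_on_comparison_test[OF g])
    fix p :: "nat \<times> nat"
    obtain i j where p: "p = (i,j)" by fastforce
    have "tm q a a' b b' c x y p = ((((((((qpoch a q i * qpoch a' q j) * qpoch b q i) * qpoch b' q j)
       * (1 / qpoch q q i)) * (1 / qpoch q q j)) * (1 / qpoch c q (i+j))) * x^i) * y^j)"
      by (simp add: tm_def p)
    also have "norm \<dots> \<le> ((((((((B1 * B2) * B3) * B4) * B5) * B5) * B6) * norm x^i) * norm y^j)"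
      by (intro nm) (simp_all add: B1 B2 B3 B4 B5 B6 norm_power)
    also have "\<dots> = (\<lambda>(i,j). K * (norm x^i * norm y^j)) p" by (simp add: p K_def mult_ac)
    finally show "norm (tm q a a' b b' c x y p) \<le> (\<lambda>(i,j). K * (norm x^i * norm y^j)) p" .
  qed simp
  then show ?thesis using summable_on_iff_abs_summable_on_complex by blast
qed

lemma has_sum_finsum:
  fixes n :: nat and f :: "nat \<Rightarrow> 'a \<Rightarrow> complex"
  assumes "\<And>k. k \<le> n \<Longrightarrow> (f k has_sum s k) A"
  shows "((\<lambda>p. \<Sum>k\<le>n. f k p) has_sum (\<Sum>k\<le>n. s k)) A"
  using assms
proof (induction n)
  case 0 then show ?case by simp
next
  case (Suc n)
  have h1: "((\<lambda>p. \<Sum>k\<le>n. f k p) has_sum (\<Sum>k\<le>n. s k)) A" using Suc by simp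
  have h2: "(f (Suc n) has_sum s (Suc n)) A" using Suc.prems by simp
  show ?case unfolding sum.atMost_Suc by (rule has_sum_add[OF h1 h2])
qed


lemma lin:
  fixes f :: "nat \<Rightarrow> 'a \<Rightarrow> complex"
  assumes "\<And>k. f k summable_on UNIV"
  shows "(\<Sum>k\<le>n. coef k * infsum (f k) UNIV) = infsum (\<lambda>p. \<Sum>k\<le>n. coef k * f k p) UNIV"
proof -
  have "((\<lambda>p. \<Sum>k\<le>n. coef k * f k p) has_sum (\<Sum>k\<le>n. coef k * infsum (f k) UNIV)) UNIV"
    by (rule has_sum_finsum) (intro has_sum_cmult_right has_sum_infsum assms)
  then show ?thesis by (simp add: infsumI)
qed

lemma qq_nz:
  assumes q1: "norm (q::complex) < 1" shows "q*q^j \<noteq> 1"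
proof -
    have "norm q ^ j \<le> 1" using q1 by (intro power_le_one) simp_all
    then have "norm q * norm q ^ j \<le> norm q" by (intro mult_left_le) simp_all
    then have "norm (q*q^j) \<le> norm q" by (simp add: norm_mult norm_power)
    also have "\<dots> < 1" using q1 by simp
    finally show "q*q^j \<noteq> 1" by auto
qed

lemma normq_lt: "norm (q::complex) < 1 \<Longrightarrow> norm x < 1 \<Longrightarrow> norm (x*q^k) < 1"
proof -
  assume q1: "norm q < 1" and x1: "norm x < 1"
  have "norm q ^ k \<le> 1" using q1 by (intro power_le_one) simp_all
  then have "norm x * norm q ^ k \<le> norm x" by (intro mult_left_le) simp_all
  then show ?thesis using x1 by (simp add: norm_mult norm_power)
qed

lemma xy_pow: "(x*q^k)^i * (y*q^k)^j = x^i * y^j * (q::complex)^(k*(i+j))"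
proof -
  have 1: "(x*q^k)^i = x^i*q^(k*i)" by (simp add: power_mult_distrib power_mult)
  have 2: "(y*q^k)^j = y^j*q^(k*j)" by (simp add: power_mult_distrib power_mult)
  have 3: "q^(k*(i+j)) = q^(k*i)*q^(k*j)" by (simp add: distrib_left power_add)
  show ?thesis unfolding 1 2 3 by (simp add: mult_ac)
qed

theorem theorem13:
  fixes q a a' b b' c x y :: complex and n :: nat
  assumes "0 < norm q" and "norm q < 1"
    and "norm x < 1" and "norm y < 1"
  shows "((c \<noteq> 0 \<and> (\<forall>j::int. j \<ge> - int n \<longrightarrow> c * q powi j \<noteq> 1)) \<longrightarrow>
           Phi3 q a a' b b' (c / q ^ n) x y =
             1 / qpoch (q / c) q n *
             (\<Sum>k\<le>n. qbinom q n k * (- c) powi (int k - int n) * q ^ ((n + 1 - k) choose 2)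
                        * Phi3 q a a' b b' c (x * q ^ k) (y * q ^ k)))
       \<and> ((\<forall>j::nat. c * q ^ j \<noteq> 1) \<longrightarrow>
           Phi3 q a a' b b' (c * q ^ n) x y =
             (\<Sum>k\<le>n. qbinom q n k * c ^ k * q ^ (2 * (k choose 2)) * qpoch (c * q ^ k) q (n - k)
                        * Phi3 q a a' b b' (c * q ^ k) (x * q ^ k) (y * q ^ k)))"
proof -
  have q0: "q \<noteq> 0" using assms(1) by auto
  have q1: "norm q < 1" and x1: "norm x < 1" and y1: "norm y < 1" using assms by auto
  have qq: "\<And>n. qpoch q q n \<noteq> 0" by (rule qpoch_nonzero) (use qq_nz[OF q1] in auto)
  define A where "A = (\<lambda>i j. qpoch a q i * qpoch a' q j * qpoch b q i * qpoch b' q j / (qpoch q q i * qpoch q q j) * x^i * y^j)"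
  have tmA: "tm q a a' b b' c' (x*q^k) (y*q^k) (i,j) = A i j * (q^(k*(i+j)) / qpoch c' q (i+j))" for c' k i j
  proof -
    have "tm q a a' b b' c' (x*q^k) (y*q^k) (i,j) = qpoch a q i * qpoch a' q j * qpoch b q i * qpoch b' q j
        / (qpoch q q i * qpoch q q j * qpoch c' q (i + j)) * ((x*q^k)^i * (y*q^k)^j)"
      by (simp add: tm_def)
    also have "\<dots> = A i j * (q^(k*(i+j)) / qpoch c' q (i+j))"
      unfolding xy_pow A_def by (simp add: divide_inverse inverse_mult_distrib mult_ac)
    finally show ?thesis .
  qed
  have tmA0: "tm q a a' b b' c' x y (i,j) = A i j * (1 / qpoch c' q (i+j))" for c' i j
    using tmA[of c' 0 i j] by simp
  have P1: "Phi3 q a a' b b' (c / q ^ n) x y =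
             1 / qpoch (q / c) q n *
             (\<Sum>k\<le>n. qbinom q n k * (- c) powi (int k - int n) * q ^ ((n + 1 - k) choose 2)
                        * Phi3 q a a' b b' c (x * q ^ k) (y * q ^ k))"
    if c0: "c \<noteq> 0" and H: "\<forall>j::int. j \<ge> - int n \<longrightarrow> c * q powi j \<noteq> 1"
  proof -
    have Hn: "\<forall>j::nat. c * q^j \<noteq> 1"
    proof
      fix j :: nat show "c * q^j \<noteq> 1" using H[rule_format, of "int j"] by simp
    qed
    define coef where "coef k = qbinom q n k * (- c) powi (int k - int n) * q ^ ((n + 1 - k) choose 2)" for k
    define f where "f k = tm q a a' b b' c (x*q^k) (y*q^k)" for k
    have sk: "f k summable_on UNIV" for k
      unfolding f_def by (rule tm_summable[OF q1 q0 normq_lt[OF q1 x1] normq_lt[OF q1 y1] Hn])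
    have "1 / qpoch (q / c) q n * (\<Sum>k\<le>n. qbinom q n k * (- c) powi (int k - int n) * q ^ ((n + 1 - k) choose 2)
                        * Phi3 q a a' b b' c (x * q ^ k) (y * q ^ k))
        = 1 / qpoch (q / c) q n * (\<Sum>k\<le>n. coef k * infsum (f k) UNIV)"
      by (simp add: coef_def f_def Phi3_tm)
    also have "\<dots> = 1 / qpoch (q / c) q n * infsum (\<lambda>p. \<Sum>k\<le>n. coef k * f k p) UNIV"
      by (simp add: lin[OF sk])
    also have "\<dots> = infsum (\<lambda>p. 1 / qpoch (q / c) q n * (\<Sum>k\<le>n. coef k * f k p)) UNIV"
      by (rule infsum_cmult_right'[symmetric])
    also have "\<dots> = infsum (tm q a a' b b' (c / q ^ n) x y) UNIV"
    proof (rule infsum_cong)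
      fix p :: "nat \<times> nat"
      obtain i j where p: "p = (i,j)" by fastforce
      have "1 / qpoch (q / c) q n * (\<Sum>k\<le>n. coef k * f k p)
          = A i j * (1 / qpoch (q / c) q n * (\<Sum>k\<le>n. qbinom q n k * (-c) powi (int k - int n) * q^((n+1-k) choose 2) * q^(k*(i+j)) / qpoch c q (i+j)))"
        by (simp add: p f_def tmA coef_def sum_distrib_left mult_ac)
      also have "\<dots> = A i j * (1 / qpoch (c/q^n) q (i+j))"
        by (simp only: key1[OF qq q0 c0 H])
      also have "\<dots> = tm q a a' b b' (c / q ^ n) x y p" by (simp add: p tmA0)
      finally show "1 / qpoch (q / c) q n * (\<Sum>k\<le>n. coef k * f k p) = tm q a a' b b' (c / q ^ n) x y p" .
    qed
    finally show ?thesis by (simp add: Phi3_tm)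
  qed
  have P2: "Phi3 q a a' b b' (c * q ^ n) x y =
             (\<Sum>k\<le>n. qbinom q n k * c ^ k * q ^ (2 * (k choose 2)) * qpoch (c * q ^ k) q (n - k)
                        * Phi3 q a a' b b' (c * q ^ k) (x * q ^ k) (y * q ^ k))"
    if H: "\<forall>j::nat. c * q ^ j \<noteq> 1"
  proof -
    define coef where "coef k = qbinom q n k * c ^ k * q ^ (2 * (k choose 2)) * qpoch (c * q ^ k) q (n - k)" for k
    define f where "f k = tm q a a' b b' (c*q^k) (x*q^k) (y*q^k)" for k
    have sk: "f k summable_on UNIV" for k
    proof -
      have "\<forall>j. c*q^k*q^j \<noteq> 1" using H by (simp add: mult.assoc flip: power_add)
      then show ?thesis
        unfolding f_def by (rule tm_summable[OF q1 q0 normq_lt[OF q1 x1] normq_lt[OF q1 y1]])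
    qed
    have "(\<Sum>k\<le>n. qbinom q n k * c ^ k * q ^ (2 * (k choose 2)) * qpoch (c * q ^ k) q (n - k)
                        * Phi3 q a a' b b' (c * q ^ k) (x * q ^ k) (y * q ^ k))
        = (\<Sum>k\<le>n. coef k * infsum (f k) UNIV)"
      by (simp add: coef_def f_def Phi3_tm)
    also have "\<dots> = infsum (\<lambda>p. \<Sum>k\<le>n. coef k * f k p) UNIV"
      by (simp add: lin[OF sk])
    also have "\<dots> = infsum (tm q a a' b b' (c * q ^ n) x y) UNIV"
    proof (rule infsum_cong)
      fix p :: "nat \<times> nat"
      obtain i j where p: "p = (i,j)" by fastforce
      have "(\<Sum>k\<le>n. coef k * f k p)
          = A i j * (\<Sum>k\<le>n. qbinom q n k * c^k * q^(2*(k choose 2)) * qpoch (c*q^k) q (n-k) * q^(k*(i+j)) / qpoch (c*q^k) q (i+j))"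
        by (simp add: p f_def tmA coef_def sum_distrib_left mult_ac)
      also have "\<dots> = A i j * (1 / qpoch (c*q^n) q (i+j))"
        by (simp only: key2[OF qq H])
      also have "\<dots> = tm q a a' b b' (c * q ^ n) x y p" by (simp add: p tmA0)
      finally show "(\<Sum>k\<le>n. coef k * f k p) = tm q a a' b b' (c * q ^ n) x y p" .
    qed
    finally show ?thesis by (simp add: Phi3_tm)
  qed
  show ?thesis using P1 P2 by blast
qed


end
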